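(* Let $q\in\mathbb{C}^*$ with $|q|>1$, let $R$ be a meromorphic function on $\mathbb{C}^*$, and let $\rho>0$. Then the equation $y(qx)=y(x)+R(x)$ admits a meromorphic solution on $\mathbb{C}^*$ whose poles are located at the elements of: $q^{\mathbb{Z}}$ with order at most $1$; $aq^{\mathbb{N}^*}$ with order $\mu_{R,a}$ for every $a\in\mathcal{P}^*_{R,>\rho}$; $aq^{-\mathbb{N}}$ with order $\mu_{R,a}$ for every $a\in\mathcal{P}^*_{R,\leq\rho}$.
   Context: $q^{\mathbb{Z}}=\{q^n:n\in\mathbb{Z}\}$, $aq^{\mathbb{N}^*}=\{aq^n:n\geq1\}$, $aq^{-\mathbb{N}}=\{aq^{-n}:n\geq0\}$. $\mathcal{P}^*_{R,\leq\rho}$ (resp. $\mathcal{P}^*_{R,>\rho}$) is the set of poles $a\neq0$ of $R$ with $|a|\leq\rho$ (resp. $|a|>\rho$), and $\mu_{R,a}$ is the order of the pole $a$ of $R$. *)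

theory Defs
  imports "HOL-Complex_Analysis.Complex_Analysis"
begin

text \<open>Order of a pole a of f (the paper's mu_{f,a}); for a pole, zorder f a is negative.\<close>
definition pole_order :: "(complex \<Rightarrow> complex) \<Rightarrow> complex \<Rightarrow> int" where
  "pole_order f a = - zorder f a"

definition poles_le :: "(complex \<Rightarrow> complex) \<Rightarrow> real \<Rightarrow> complex set" where
  "poles_le R \<rho> = {a. a \<noteq> 0 \<and> is_pole R a \<and> norm a \<le> \<rho>}"

definition poles_gt :: "(complex \<Rightarrow> complex) \<Rightarrow> real \<Rightarrow> complex set" where
  "poles_gt R \<rho> = {a. a \<noteq> 0 \<and> is_pole R a \<and> norm a > \<rho>}"

end

theory Submission imports Defs begin

definition good :: "(complex \<Rightarrow> complex) \<Rightarrow> complex \<Rightarrow> int set \<Rightarrow> bool" where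
  "good h z V \<longleftrightarrow> (\<exists>F. (\<lambda>w. h (z + w)) has_laurent_expansion F \<and>
      (0 \<le> fls_subdegree F \<or> (\<exists>v\<in>V. v \<le> fls_subdegree F)))"

lemma good_add:
  assumes "good h z V" "good k z V"
  shows "good (\<lambda>x. h x + k x) z V"
proof -
  obtain F where F: "(\<lambda>w. h (z + w)) has_laurent_expansion F"
    "0 \<le> fls_subdegree F \<or> (\<exists>v\<in>V. v \<le> fls_subdegree F)"
    using assms(1) unfolding good_def by blast
  obtain G where G: "(\<lambda>w. k (z + w)) has_laurent_expansion G"
    "0 \<le> fls_subdegree G \<or> (\<exists>v\<in>V. v \<le> fls_subdegree G)"
    using assms(2) unfolding good_def by blast
  have FG: "(\<lambda>w. h (z + w) + k (z + w)) has_laurent_expansion F + G"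
    by (intro laurent_expansion_intros F G)
  show ?thesis unfolding good_def
  proof (rule exI[of _ "F + G"], intro conjI)
    show "(\<lambda>w. h (z + w) + k (z + w)) has_laurent_expansion F + G" by fact
    show "0 \<le> fls_subdegree (F + G) \<or> (\<exists>v\<in>V. v \<le> fls_subdegree (F + G))"
    proof (cases "F + G = 0")
      case True then show ?thesis by simp
    next
      case False
      then have "fls_subdegree (F + G) \<ge> min (fls_subdegree F) (fls_subdegree G)"
        by (rule fls_plus_subdegree)
      then show ?thesis using F(2) G(2) by (smt (verit, ccfv_SIG) min_def)
    qed
  qed
qed

lemma good_analytic:
  assumes "h analytic_on {z}"
  shows "good h z V"
proof -
  obtain F where "(\<lambda>w. h (z + w)) has_fps_expansion F"
    using analytic_at_imp_has_fps_expansion[OF assms] by blast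
  then have "(\<lambda>w. h (z + w)) has_laurent_expansion fps_to_fls F"
    by (rule has_laurent_expansion_fps)
  moreover have "0 \<le> fls_subdegree (fps_to_fls F)"
    by (simp add: fls_subdegree_fls_to_fps)
  ultimately show ?thesis unfolding good_def by blast
qed

lemma good_cmult:
  assumes "good h z V"
  shows "good (\<lambda>x. c * h x) z V"
proof -
  obtain F where F: "(\<lambda>w. h (z + w)) has_laurent_expansion F"
    "0 \<le> fls_subdegree F \<or> (\<exists>v\<in>V. v \<le> fls_subdegree F)"
    using assms(1) unfolding good_def by blast
  have "(\<lambda>w. c * h (z + w)) has_laurent_expansion fls_const c * F"
    by (intro laurent_expansion_intros F)
  moreover have "0 \<le> fls_subdegree (fls_const c * F) \<or> (\<exists>v\<in>V. v \<le> fls_subdegree (fls_const c * F))"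
    using F(2) by (cases "c = 0"; cases "F = 0") (auto simp: fls_subdegree_mult)
  ultimately show ?thesis unfolding good_def by blast
qed

lemma good_mono:
  assumes "good h z V" "V \<subseteq> W"
  shows "good h z W"
  using assms unfolding good_def by blast

lemma good_cong:
  assumes "good h z V" "eventually (\<lambda>x. h x = k x) (at z)"
  shows "good k z V"
proof -
  obtain F where F: "(\<lambda>w. h (z + w)) has_laurent_expansion F"
    "0 \<le> fls_subdegree F \<or> (\<exists>v\<in>V. v \<le> fls_subdegree F)"
    using assms(1) unfolding good_def by blast
  have "(\<lambda>w. k (z + w)) has_laurent_expansion F"
    using F(1) has_laurent_expansion_cong'[OF assms(2) refl refl] by simp
  then show ?thesis using F(2) unfolding good_def by blast
qed

lemma good_sum:
  assumes "finite A" "\<And>i. i \<in> A \<Longrightarrow> good (h i) z V"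
  shows "good (\<lambda>x. \<Sum>i\<in>A. h i x) z V"
  using assms
proof (induction A rule: finite_induct)
  case empty
  then show ?case by (simp add: good_analytic)
next
  case (insert a A)
  have "good (\<lambda>x. h a x + (\<Sum>i\<in>A. h i x)) z V"
    by (intro good_add insert) auto
  then show ?case using insert by simp
qed

lemma good_meromorphic:
  assumes "good h z V" shows "h meromorphic_on {z}"
  using assms unfolding good_def meromorphic_on_def by blast

lemma good_pole:
  assumes "good h z V" "is_pole h z"
  shows "\<exists>v\<in>V. v \<le> zorder h z"
proof -
  obtain F where F: "(\<lambda>w. h (z + w)) has_laurent_expansion F"
    "0 \<le> fls_subdegree F \<or> (\<exists>v\<in>V. v \<le> fls_subdegree F)"
    using assms(1) unfolding good_def by blast
  have neg: "fls_subdegree F < 0"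
    using is_pole_fls_subdegree_iff[OF F(1)] assms(2) by blast
  then have "F \<noteq> 0" by auto
  then have "zorder h z = fls_subdegree F"
    using has_laurent_expansion_zorder[OF F(1)] by blast
  then show ?thesis using F(2) neg by auto
qed

lemma good_scale:
  assumes "f meromorphic_on {c * z}" "c \<noteq> 0"
  shows "good (\<lambda>x. f (c * x)) z {zorder f (c * z) |_::unit. is_pole f (c * z)}"
proof -
  have m: "(\<lambda>x. f (c * x)) meromorphic_on {z}"
    by (rule meromorphic_on_compose[OF assms(1)]) (auto intro!: analytic_intros)
  then obtain F where F: "(\<lambda>w. f (c * (z + w))) has_laurent_expansion F"
    unfolding meromorphic_on_def by blast
  show ?thesis
  proof (cases "0 \<le> fls_subdegree F")
    case True
    then show ?thesis using F unfolding good_def by blast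
  next
    case False
    then have "F \<noteq> 0" by auto
    have pole: "is_pole (\<lambda>x. f (c * x)) z"
      using is_pole_fls_subdegree_iff[OF F] False by simp
    have zo: "zorder (\<lambda>x. f (c * x)) z = fls_subdegree F"
      using has_laurent_expansion_zorder[OF F \<open>F \<noteq> 0\<close>] by simp
    also have "zorder (\<lambda>x. f (c * x)) z = zorder f (c * z)"
      using zorder_scale[OF assms] by simp
    finally have zz: "zorder f (c * z) = fls_subdegree F" .
    have nz: "eventually (\<lambda>w. f w \<noteq> 0) (at (c * z))"
    proof -
      have "filterlim f at_infinity (at (c * z))"
      proof -
        have "filterlim (\<lambda>x. f (c * x)) at_infinity (at z)" using pole by (simp add: is_pole_def)
        have lim: "filterlim (\<lambda>w. w / c) (at z) (at (c * z))"
        proof (rule filterlim_atI)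
          show "((\<lambda>w. w / c) \<longlongrightarrow> z) (at (c * z))"
            using assms(2) by (auto intro!: tendsto_eq_intros)
          show "\<forall>\<^sub>F x in at (c * z). x / c \<noteq> z"
            using assms(2) by (auto simp: eventually_at_filter field_simps)
        qed
        have "filterlim (\<lambda>w. f (c * (w / c))) at_infinity (at (c * z))"
          using filterlim_compose[OF \<open>filterlim (\<lambda>x. f (c * x)) at_infinity (at z)\<close> lim] by simp
        then show ?thesis using assms(2) by simp
      qed
      then show ?thesis using is_pole_def non_zero_neighbour_pole by blast
    qed
    have "is_pole f (c * z)"
      using zorder_neg_imp_is_pole[OF assms(1) nz] zz False by simp
    then show ?thesis using F zz unfolding good_def by force
  qed
qed

lemma series_holo:
  fixes f :: "nat \<Rightarrow> complex \<Rightarrow> complex"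
  assumes S: "open S" and hol: "\<And>n. f n holomorphic_on S" and h: "summable h"
    and bd: "\<And>n x. x \<in> S \<Longrightarrow> norm (f n x) \<le> h n"
  shows "(\<lambda>x. \<Sum>n. f n x) holomorphic_on S" and "\<And>x. x \<in> S \<Longrightarrow> summable (\<lambda>n. f n x)"
proof -
  have hfd: "\<And>n x. x \<in> S \<Longrightarrow> (f n has_field_derivative deriv (f n) x) (at x)"
    by (rule holomorphic_derivI[OF hol S])
  have ev: "eventually (\<lambda>n. \<forall>x\<in>S. norm (f n x) \<le> h n) sequentially"
    using bd by (simp add: always_eventually)
  obtain g g' where gg: "\<forall>x \<in> S. ((\<lambda>n. f n x) sums g x) \<and> ((\<lambda>n. deriv (f n) x) sums g' x) \<and> (g has_field_derivative g' x) (at x)"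
    using series_and_derivative_comparison[OF S h hfd ev] by blast
  show "\<And>x. x \<in> S \<Longrightarrow> summable (\<lambda>n. f n x)" using gg sums_summable by blast
  have eq: "\<And>x. x \<in> S \<Longrightarrow> g x = (\<Sum>n. f n x)" using gg sums_unique by blast
  show "(\<lambda>x. \<Sum>n. f n x) holomorphic_on S"
    unfolding holomorphic_on_open[OF S]
  proof
    fix x assume "x \<in> S"
    then have "((\<lambda>x. \<Sum>n. f n x) has_field_derivative g' x) (at x)"
      using has_field_derivative_transform_within_open[of g "g' x" x S "\<lambda>x. \<Sum>n. f n x"] gg eq S \<open>x \<in> S\<close> by simp
    then show "\<exists>f'. ((\<lambda>x. \<Sum>n. f n x) has_field_derivative f') (at x)" by blast
  qed
qed

lemma pow_large:
  fixes q :: complex and B :: real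
  assumes "norm q > 1"
  shows "\<exists>N. B < norm q ^ N"
  using real_arch_pow[OF assms] by blast

lemma div_pow_le:
  fixes q :: complex
  assumes "norm q > 1" "r \<ge> 0"
  shows "r / norm q ^ k \<le> r"
proof -
  have "1 \<le> norm q ^ k" using assms by (simp add: one_le_power less_imp_le)
  then show ?thesis using assms by (simp add: divide_le_eq mult_le_cancel_left1)
qed

lemma inner_sum:
  fixes q :: complex and f :: "complex \<Rightarrow> complex" and r C :: real
  assumes q: "norm q > 1" and mer: "f meromorphic_on UNIV" and r: "r > 0"
    and hol: "f holomorphic_on ball 0 r"
    and C: "\<And>x. norm x < r \<Longrightarrow> norm (f x - f 0) \<le> C * norm x"
  shows inner_summable: "summable (\<lambda>n. f (x / q ^ Suc n) - f 0)"
    and inner_eq: "(\<Sum>n. f (q * x / q ^ Suc n) - f 0) = (\<Sum>n. f (x / q ^ Suc n) - f 0) + (f x - f 0)"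
    and inner_good: "good (\<lambda>x. \<Sum>n. f (x / q ^ Suc n) - f 0) z
                       {zorder f (z / q ^ Suc n) | n. is_pole f (z / q ^ Suc n)}"
proof -
  have q0: "q \<noteq> 0" using q by auto
  have nq: "norm q > 0" using q by auto
  define B where "B = (\<lambda>N::nat. ball (0::complex) (r * norm q ^ N))"
  have tail: "(\<lambda>x. \<Sum>n. f (x / q ^ Suc (n + N)) - f 0) holomorphic_on B N \<and>
        (\<forall>x\<in>B N. summable (\<lambda>n. f (x / q ^ Suc (n + N)) - f 0))" for N
  proof -
    have hterm: "(\<lambda>x. f (x / q ^ Suc (n + N)) - f 0) holomorphic_on B N" for n
    proof -
      have "(\<lambda>x. x / q ^ Suc (n + N)) ` B N \<subseteq> ball 0 r"
      proof
        fix y assume "y \<in> (\<lambda>x. x / q ^ Suc (n + N)) ` B N"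
        then obtain x where x: "x \<in> B N" "y = x / q ^ Suc (n + N)" by blast
        have "norm y = norm x / norm q ^ Suc (n + N)" by (simp only: x norm_divide norm_power)
        also have "\<dots> < r * norm q ^ N / norm q ^ Suc (n + N)"
          using x nq by (intro divide_strict_right_mono) (auto simp: B_def)
        also have "\<dots> = r / norm q ^ Suc n"
          using nq by (simp add: power_add field_simps)
        also have "\<dots> \<le> r" using q r by (intro div_pow_le) auto
        finally show "y \<in> ball 0 r" by simp
      qed
      then have "(f \<circ> (\<lambda>x. x / q ^ Suc (n + N))) holomorphic_on B N"
        by (intro holomorphic_on_compose_gen[OF _ hol]) (auto intro!: holomorphic_intros simp: q0)
      then show ?thesis by (auto simp: o_def intro!: holomorphic_intros)
    qed
    define h where "h = (\<lambda>n::nat. \<bar>C\<bar> * r * (1 / norm q) ^ Suc n)"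
    have lt1: "norm (1 / norm q) < 1" using q by (simp add: divide_less_eq_1)
    have sh: "summable h"
      unfolding h_def
      by (intro summable_mult summable_Suc_iff[THEN iffD2] summable_geometric lt1)
    have bd: "norm (f (x / q ^ Suc (n + N)) - f 0) \<le> h n" if x: "x \<in> B N" for n x
    proof -
      have "norm (x / q ^ Suc (n + N)) = norm x / norm q ^ Suc (n + N)" by (simp only: norm_divide norm_power)
      also have "\<dots> \<le> r * norm q ^ N / norm q ^ Suc (n + N)"
        using x nq by (intro divide_right_mono) (auto simp: B_def)
      also have "\<dots> = r / norm q ^ Suc n"
        using nq by (simp add: power_add field_simps)
      finally have le: "norm (x / q ^ Suc (n + N)) \<le> r / norm q ^ Suc n" .
      also have "\<dots> \<le> r" using q r by (intro div_pow_le) auto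
      finally have "norm (x / q ^ Suc (n + N)) \<le> r" .
      have lt: "norm (x / q ^ Suc (n + N)) < r"
      proof -
        have "norm x / norm q ^ Suc (n + N) < r * norm q ^ N / norm q ^ Suc (n + N)"
          using x nq by (intro divide_strict_right_mono) (auto simp: B_def)
        also have "\<dots> = r / norm q ^ Suc n"
          using nq by (simp add: power_add field_simps)
        also have "\<dots> \<le> r" using q r by (intro div_pow_le) auto
        finally show ?thesis by (simp only: norm_divide norm_power)
      qed
      have "norm (f (x / q ^ Suc (n + N)) - f 0) \<le> C * norm (x / q ^ Suc (n + N))"
        using C[OF lt] .
      also have "\<dots> \<le> \<bar>C\<bar> * norm (x / q ^ Suc (n + N))" by (intro mult_right_mono) auto
      also have "\<dots> \<le> \<bar>C\<bar> * (r / norm q ^ Suc n)" by (intro mult_left_mono le) auto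
      also have "\<dots> = h n" by (simp add: h_def power_divide)
      finally show ?thesis .
    qed
    show ?thesis
      using series_holo[of "B N" "\<lambda>n x. f (x / q ^ Suc (n + N)) - f 0" h] hterm sh bd
      by (auto simp: B_def)
  qed
  have inB: "\<exists>N. x \<in> B N" for x
  proof -
    obtain N where "norm x / r < norm q ^ N" using pow_large[OF q] by blast
    then have "norm x < r * norm q ^ N" using r by (simp add: field_simps)
    then show ?thesis by (auto simp: B_def)
  qed
  have summ: "summable (\<lambda>n. f (x / q ^ Suc n) - f 0)" for x
  proof -
    obtain N where "x \<in> B N" using inB by blast
    then have "summable (\<lambda>n. f (x / q ^ Suc (n + N)) - f 0)" using tail by blast
    then show ?thesis by (subst summable_iff_shift[symmetric, of _ N]) simp
  qed
  show "summable (\<lambda>n. f (x / q ^ Suc n) - f 0)" by (rule summ)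
  show "(\<Sum>n. f (q * x / q ^ Suc n) - f 0) = (\<Sum>n. f (x / q ^ Suc n) - f 0) + (f x - f 0)"
  proof -
    define a where "a = (\<lambda>n. f (x / q ^ n) - f 0)"
    have e1: "(\<lambda>n. f (q * x / q ^ Suc n) - f 0) = a"
      using q0 by (auto simp: a_def)
    have sa: "summable a" using summ[of x] unfolding a_def by (subst summable_Suc_iff[symmetric]) simp
    have "(\<Sum>n. a (Suc n)) = suminf a - a 0" by (rule suminf_split_head[OF sa])
    then show ?thesis unfolding e1 by (simp add: a_def)
  qed
  show "good (\<lambda>x. \<Sum>n. f (x / q ^ Suc n) - f 0) z
                       {zorder f (z / q ^ Suc n) | n. is_pole f (z / q ^ Suc n)}"
    (is "good ?Y z ?V")
  proof -
    obtain N where N: "z \<in> B N" using inB by blast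
    define T where "T = (\<lambda>x. \<Sum>n. f (x / q ^ Suc (n + N)) - f 0)"
    have oB: "open (B N)" by (simp add: B_def)
    have gT: "good T z ?V"
      using tail[of N] N oB unfolding T_def
      by (intro good_analytic) (meson analytic_on_open analytic_on_subset empty_subsetI insert_subset)
    have gterm: "good (\<lambda>x. f (x / q ^ Suc n) - f 0) z ?V" for n
    proof -
      have "good (\<lambda>x. f (inverse (q ^ Suc n) * x)) z
              {zorder f (inverse (q ^ Suc n) * z) |_::unit. is_pole f (inverse (q ^ Suc n) * z)}"
        by (rule good_scale) (use mer q0 in \<open>auto intro: meromorphic_on_subset\<close>)
      then have "good (\<lambda>x. f (inverse (q ^ Suc n) * x)) z ?V"
        by (rule good_mono) (auto simp: divide_inverse_commute)
      then have "good (\<lambda>x. f (inverse (q ^ Suc n) * x) + (- f 0)) z ?V"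
        using good_add[OF _ good_analytic[of "\<lambda>_. - f 0" z]] by auto
      then show ?thesis by (simp add: divide_inverse_commute)
    qed
    have "good (\<lambda>x. T x + (\<Sum>n<N. f (x / q ^ Suc n) - f 0)) z ?V"
      by (intro good_add gT good_sum gterm) auto
    moreover have "eventually (\<lambda>x. T x + (\<Sum>n<N. f (x / q ^ Suc n) - f 0) = ?Y x) (at z)"
    proof -
      have "eventually (\<lambda>x. x \<in> B N) (at z)" using oB N by (rule eventually_at_in_open')
      then show ?thesis
      proof eventually_elim
        case (elim x)
        show ?case unfolding T_def
          using suminf_split_initial_segment[OF summ[of x], of N] by simp
      qed
    qed
    ultimately show ?thesis by (rule good_cong)
  qed
qed

lemma outer_sum:
  fixes q :: complex and g :: "complex \<Rightarrow> complex" and r C :: real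
  assumes q: "norm q > 1" and mer: "g meromorphic_on (-{0})" and r: "r > 0"
    and hol: "g holomorphic_on {x. norm x > r}"
    and C: "\<And>x. norm x > r \<Longrightarrow> norm (g x) \<le> C / norm x"
  shows outer_summable: "x \<noteq> 0 \<Longrightarrow> summable (\<lambda>n. g (q ^ n * x))"
    and outer_eq: "x \<noteq> 0 \<Longrightarrow> -(\<Sum>n. g (q ^ n * (q * x))) = -(\<Sum>n. g (q ^ n * x)) + g x"
    and outer_good: "z \<noteq> 0 \<Longrightarrow> good (\<lambda>x. -(\<Sum>n. g (q ^ n * x))) z
                       {zorder g (q ^ n * z) | n. is_pole g (q ^ n * z)}"
proof -
  have q0: "q \<noteq> 0" using q by auto
  have nq: "norm q > 0" using q by auto
  define B where "B = (\<lambda>N::nat. {x::complex. norm x > r / norm q ^ N})"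
  have oB: "open (B N)" for N unfolding B_def
    by (intro open_Collect_less continuous_intros)
  have big: "norm (q ^ (n + N) * x) > r * norm q ^ n" if x: "x \<in> B N" for n N x
  proof -
    have "norm (q ^ (n + N) * x) = norm q ^ n * (norm q ^ N * norm x)"
      by (simp add: norm_mult norm_power power_add)
    moreover have "norm q ^ N * norm x > r"
    proof -
      have "r / norm q ^ N < norm x" using x by (simp add: B_def)
      then show ?thesis using nq by (simp add: divide_less_eq mult.commute)
    qed
    ultimately show ?thesis using nq by (simp add: mult.commute)
  qed
  have rle: "r \<le> r * norm q ^ n" for n
    using q r by (simp add: mult_le_cancel_left1 one_le_power less_imp_le)
  have tail: "(\<lambda>x. \<Sum>n. g (q ^ (n + N) * x)) holomorphic_on B N \<and>
        (\<forall>x\<in>B N. summable (\<lambda>n. g (q ^ (n + N) * x)))" for N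
  proof -
    have hterm: "(\<lambda>x. g (q ^ (n + N) * x)) holomorphic_on B N" for n
    proof -
      have "(\<lambda>x. q ^ (n + N) * x) ` B N \<subseteq> {x. norm x > r}"
      proof (rule image_subsetI)
        fix x assume "x \<in> B N"
        then have "norm (q ^ (n + N) * x) > r * norm q ^ n" by (rule big)
        then show "q ^ (n + N) * x \<in> {x. norm x > r}" using rle[of n] by simp
      qed
      then have "(g \<circ> (\<lambda>x. q ^ (n + N) * x)) holomorphic_on B N"
        by (intro holomorphic_on_compose_gen[OF _ hol]) (auto intro!: holomorphic_intros)
      then show ?thesis by (auto simp: o_def)
    qed
    define h where "h = (\<lambda>n::nat. \<bar>C\<bar> / r * (1 / norm q) ^ n)"
    have lt1: "norm (1 / norm q) < 1" using q by (simp add: divide_less_eq_1)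
    have sh: "summable h"
      unfolding h_def by (intro summable_mult summable_geometric lt1)
    have bd: "norm (g (q ^ (n + N) * x)) \<le> h n" if x: "x \<in> B N" for n x
    proof -
      have b1: "norm (q ^ (n + N) * x) > r * norm q ^ n" using big[OF x] .
      have pos: "r * norm q ^ n > 0" using r nq by simp
      have "norm (g (q ^ (n + N) * x)) \<le> C / norm (q ^ (n + N) * x)"
        using C[of "q ^ (n + N) * x"] b1 rle[of n] by linarith
      also have "\<dots> \<le> \<bar>C\<bar> / norm (q ^ (n + N) * x)"
        by (intro divide_right_mono) auto
      also have "\<dots> \<le> \<bar>C\<bar> / (r * norm q ^ n)"
      proof (rule divide_left_mono)
        show "r * norm q ^ n \<le> norm (q ^ (n + N) * x)" using b1 by linarith
        show "0 < norm (q ^ (n + N) * x) * (r * norm q ^ n)"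
        proof -
          have "0 < norm (q ^ (n + N) * x)" using b1 pos by linarith
          from this pos show ?thesis by (rule mult_pos_pos)
        qed
      qed simp
      also have "\<dots> = h n" by (simp add: h_def power_divide)
      finally show ?thesis .
    qed
    show ?thesis
      using series_holo[of "B N" "\<lambda>n x. g (q ^ (n + N) * x)" h] hterm sh bd oB
      by auto
  qed
  have inB: "\<exists>N. x \<in> B N" if "x \<noteq> 0" for x
  proof -
    obtain N where "r / norm x < norm q ^ N" using pow_large[OF q] by blast
    then have "r < norm q ^ N * norm x" using that by (simp add: divide_less_eq)
    then have "r / norm q ^ N < norm x" using nq
      by (metis mult.commute pos_divide_less_eq zero_less_power)
    then have "x \<in> B N" by (simp only: B_def mem_Collect_eq)
    then show ?thesis by blast
  qed
  have summ: "summable (\<lambda>n. g (q ^ n * x))" if x0: "x \<noteq> 0" for x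
  proof -
    obtain N where "x \<in> B N" using inB[OF x0] by (elim exE)
    then have "summable (\<lambda>n. g (q ^ (n + N) * x))" using tail by blast
    then show ?thesis by (subst summable_iff_shift[symmetric, of _ N]) simp
  qed
  show "x \<noteq> 0 \<Longrightarrow> summable (\<lambda>n. g (q ^ n * x))" by (rule summ)
  show "-(\<Sum>n. g (q ^ n * (q * x))) = -(\<Sum>n. g (q ^ n * x)) + g x" if "x \<noteq> 0"
  proof -
    define b where "b = (\<lambda>n. g (q ^ n * x))"
    have e1: "(\<lambda>n. g (q ^ n * (q * x))) = (\<lambda>n. b (Suc n))"
      by (simp add: b_def mult.assoc mult.left_commute)
    have "(\<Sum>n. b (Suc n)) = suminf b - b 0" by (rule suminf_split_head[OF summ[OF that, folded b_def]])
    then show ?thesis unfolding e1 by (simp add: b_def)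
  qed
  show "good (\<lambda>x. -(\<Sum>n. g (q ^ n * x))) z
                       {zorder g (q ^ n * z) | n. is_pole g (q ^ n * z)}"
    (is "good ?Y z ?V") if z0: "z \<noteq> 0"
  proof -
    obtain N where N: "z \<in> B N" using inB z0 by blast
    define T where "T = (\<lambda>x. \<Sum>n. g (q ^ (n + N) * x))"
    have gT: "good T z ?V"
      using tail[of N] N oB[of N] unfolding T_def
      by (intro good_analytic) (meson analytic_on_open analytic_on_subset empty_subsetI insert_subset)
    have gterm: "good (\<lambda>x. g (q ^ n * x)) z ?V" for n
    proof -
      have "good (\<lambda>x. g (q ^ n * x)) z
              {zorder g (q ^ n * z) |_::unit. is_pole g (q ^ n * z)}"
        by (rule good_scale) (use mer q0 z0 in \<open>auto intro: meromorphic_on_subset\<close>)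
      then show ?thesis by (rule good_mono) auto
    qed
    have "good (\<lambda>x. (-1) * (T x + (\<Sum>n<N. g (q ^ n * x)))) z ?V"
      by (intro good_cmult good_add gT good_sum gterm) auto
    moreover have "eventually (\<lambda>x. (-1) * (T x + (\<Sum>n<N. g (q ^ n * x))) = ?Y x) (at z)"
    proof -
      have "eventually (\<lambda>x. x \<in> B N) (at z)" using oB N by (rule eventually_at_in_open')
      then show ?thesis
      proof eventually_elim
        case (elim x)
        then have "x \<noteq> 0" using r nq by (auto simp: B_def divide_less_0_iff)
        then show ?case unfolding T_def
          using suminf_split_initial_segment[OF summ[of x], of N] by simp
      qed
    qed
    ultimately show ?thesis by (rule good_cong)
  qed
qed

lemma H_holo:
  fixes R :: "complex \<Rightarrow> complex"
  assumes r: "r > 0" and cont: "continuous_on (sphere 0 r) R"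
  shows "(\<lambda>x. contour_integral (circlepath 0 r) (\<lambda>w. R w / (w - x))) holomorphic_on (- sphere 0 r)"
proof -
  define f where "f = (\<lambda>x. contour_integral (circlepath 0 r) (\<lambda>w. R w / (w - x)))"
  have pim: "path_image (circlepath 0 r) = sphere 0 r" using r by simp
  have ci: "(\<lambda>u. R u / (u - w)) contour_integrable_on (circlepath 0 r)" if "w \<notin> sphere 0 r" for w
  proof (rule contour_integrable_continuous_circlepath)
    show "continuous_on (path_image (circlepath 0 r)) (\<lambda>u. R u / (u - w))"
      unfolding pim using that
      by (intro continuous_intros cont) auto
  qed
  have int: "((\<lambda>u. R u / (u - w) ^ 1) has_contour_integral f w) (circlepath 0 r)"
    if "w \<in> - sphere 0 r - path_image (circlepath 0 r)" for w
    using has_contour_integral_integral[OF ci[of w]] that by (simp add: f_def)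
  have "\<exists>f'. (f has_field_derivative f') (at w)" if w: "w \<in> - sphere 0 r" for w
  proof -
    have "(f has_field_derivative (of_nat 1 * contour_integral (circlepath 0 r) (\<lambda>u. R u / (u - w) ^ Suc 1))) (at w)"
    proof (rule Cauchy_next_derivative(2)[where B = "2 * pi * \<bar>r\<bar>" and k = 1 and S = "- sphere 0 r"])
      show "continuous_on (path_image (circlepath 0 r)) R" using cont pim by simp
      show "norm (vector_derivative (circlepath 0 r) (at t)) \<le> 2 * pi * \<bar>r\<bar>" if "t \<in> {0..1}" for t
        by (auto simp: vector_derivative_circlepath norm_mult)
      show "\<And>w. w \<in> - sphere 0 r - path_image (circlepath 0 r) \<Longrightarrow>
           ((\<lambda>u. R u / (u - w) ^ 1) has_contour_integral f w) (circlepath 0 r)"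
        by (rule int)
      show "w \<in> - sphere 0 r - path_image (circlepath 0 r)" using w pim by simp
    qed auto
    then show ?thesis by blast
  qed
  then show ?thesis
    unfolding f_def[symmetric] by (subst holomorphic_on_open) auto
qed

lemma annulus_cauchy:
  fixes R :: "complex \<Rightarrow> complex"
  assumes ab: "0 < a" "a < r1" "r1 < r2" "r2 < b"
    and hol: "R holomorphic_on {w. a < norm w \<and> norm w < b}"
    and x: "r1 < norm x" "norm x < r2"
  shows "contour_integral (circlepath 0 r2) (\<lambda>w. R w / (w - x)) -
         contour_integral (circlepath 0 r1) (\<lambda>w. R w / (w - x)) = 2 * pi * \<i> * R x"
proof -
  define S where "S = {w::complex. a < norm w \<and> norm w < b}"
  have S_eq: "S = {w. a < norm w} \<inter> {w. norm w < b}" by (auto simp: S_def)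
  have oS: "open S" unfolding S_eq
    by (intro open_Int open_Collect_less continuous_intros)
  have xS: "x \<in> S" using x ab by (auto simp: S_def)
  have holS: "R holomorphic_on S" using hol by (simp add: S_def)
  define \<phi> where "\<phi> = (\<lambda>w. if w = x then deriv R x else (R w - R x) / (w - x))"
  have hphi: "\<phi> holomorphic_on S"
    unfolding \<phi>_def by (rule pole_lemma[OF holS]) (simp add: interior_open[OF oS] xS)
  have circ: "circlepath 0 r t = of_real r * exp (2 * of_real pi * \<i> * of_real t)" for r t
    by (simp add: circlepath)
  have hom: "homotopic_loops S (circlepath 0 r1) (circlepath 0 r2)"
  proof (rule homotopic_loops_linear)
    fix t :: real assume "t \<in> {0..1}"
    define e where "e = exp (2 * of_real pi * \<i> * of_real t)"
    have ne: "norm e = 1" unfolding e_def by (simp add: norm_exp_eq_Re)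
    show "closed_segment (circlepath 0 r1 t) (circlepath 0 r2 t) \<subseteq> S"
    proof
      fix y assume "y \<in> closed_segment (circlepath 0 r1 t) (circlepath 0 r2 t)"
      then obtain u where u: "0 \<le> u" "u \<le> 1"
        and y: "y = (1 - u) *\<^sub>R (of_real r1 * e) + u *\<^sub>R (of_real r2 * e)"
        unfolding closed_segment_def circ e_def by blast
      have "y = of_real ((1 - u) * r1 + u * r2) * e"
        unfolding y by (simp add: scaleR_conv_of_real algebra_simps)
      then have "norm y = norm (complex_of_real ((1 - u) * r1 + u * r2)) * norm e"
        by (simp only: norm_mult)
      then have ny: "norm y = \<bar>(1 - u) * r1 + u * r2\<bar>" by (simp only: ne norm_of_real mult_1_right)
      have l: "(1 - u) * r1 + u * r2 \<ge> r1"
        using u ab by (simp add: algebra_simps mult_right_mono)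
      have "0 \<le> (r2 - r1) * (1 - u)" using u ab by simp
      then have h: "(1 - u) * r1 + u * r2 \<le> r2"
        by (simp add: algebra_simps)
      show "y \<in> S" using ny l h ab by (auto simp: S_def)
    qed
  qed auto
  have eqint: "contour_integral (circlepath 0 r1) \<phi> = contour_integral (circlepath 0 r2) \<phi>"
    by (rule Cauchy_theorem_homotopic_loops[OF hom oS hphi]) auto
  have sphS: "sphere 0 r \<subseteq> S" if "r1 \<le> r" "r \<le> r2" for r
    using that ab by (auto simp: S_def)
  have calc: "contour_integral (circlepath 0 r) \<phi> =
      contour_integral (circlepath 0 r) (\<lambda>w. R w / (w - x)) - j"
    if r: "r1 \<le> r" "r \<le> r2" "norm x \<noteq> r"
      and j: "((\<lambda>w. R x / (w - x)) has_contour_integral j) (circlepath 0 r)" for r j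
  proof -
    have rpos: "r > 0" using r ab by auto
    have pim: "path_image (circlepath 0 r) = sphere 0 r" using rpos by simp
    have contR: "continuous_on (sphere 0 r) R"
      using holomorphic_on_imp_continuous_on[OF holS] sphS[OF r(1,2)] continuous_on_subset by blast
    have ci: "(\<lambda>w. R w / (w - x)) contour_integrable_on (circlepath 0 r)"
    proof (rule contour_integrable_continuous_circlepath)
      show "continuous_on (path_image (circlepath 0 r)) (\<lambda>w. R w / (w - x))"
        unfolding pim using r(3) by (intro continuous_intros contR) auto
    qed
    have "((\<lambda>w. R w / (w - x) - R x / (w - x)) has_contour_integral
            contour_integral (circlepath 0 r) (\<lambda>w. R w / (w - x)) - j) (circlepath 0 r)"
      by (intro has_contour_integral_diff has_contour_integral_integral ci j)
    then have "(\<phi> has_contour_integral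
            contour_integral (circlepath 0 r) (\<lambda>w. R w / (w - x)) - j) (circlepath 0 r)"
    proof (rule has_contour_integral_eq)
      fix w assume "w \<in> path_image (circlepath 0 r)"
      then have "w \<noteq> x" using pim r(3) by auto
      then show "R w / (w - x) - R x / (w - x) = \<phi> w"
        by (simp add: \<phi>_def diff_divide_distrib)
    qed
    then show ?thesis by (rule contour_integral_unique)
  qed
  have j2: "((\<lambda>w. R x / (w - x)) has_contour_integral (2 * of_real pi * \<i> * R x)) (circlepath 0 r2)"
    using Cauchy_integral_circlepath_simple[of "\<lambda>_. R x" 0 r2 x] x by auto
  have j1: "((\<lambda>w. R x / (w - x)) has_contour_integral 0) (circlepath 0 r1)"
  proof (rule Cauchy_theorem_disc_simple[of _ 0 "norm x"])
    show "(\<lambda>w. R x / (w - x)) holomorphic_on ball 0 (norm x)"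
      by (intro holomorphic_intros) auto
    show "path_image (circlepath 0 r1) \<subseteq> ball 0 (norm x)"
      using x ab by auto
  qed auto
  have e: "contour_integral (circlepath 0 r2) (\<lambda>w. R w / (w - x)) - 2 * complex_of_real pi * \<i> * R x =
      contour_integral (circlepath 0 r1) (\<lambda>w. R w / (w - x))"
    using calc[of r1 0, OF _ _ _ j1] calc[of r2, OF _ _ _ j2] eqint x ab by auto
  show ?thesis by (simp add: e[symmetric])
qed

lemma sphere_bound:
  fixes R :: "complex \<Rightarrow> complex"
  assumes "continuous_on (sphere 0 r) R"
  obtains M where "M \<ge> 0" "\<And>w. norm w = r \<Longrightarrow> norm (R w) \<le> M"
proof -
  have "compact (R ` sphere 0 r)"
    by (intro compact_continuous_image assms compact_sphere)
  then have "bounded (R ` sphere 0 r)" by (rule compact_imp_bounded)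
  then obtain M where M: "\<And>y. y \<in> R ` sphere 0 r \<Longrightarrow> norm y \<le> M" by (auto simp: bounded_iff)
  show ?thesis
  proof (rule that[of "max M 0"])
    fix w :: complex assume "norm w = r"
    then have "norm (R w) \<le> M" using M by auto
    then show "norm (R w) \<le> max M 0" by simp
  qed simp
qed

lemma split_annulus:
  fixes R :: "complex \<Rightarrow> complex"
  assumes ab: "0 < a" "a < r1" "r1 < r2" "r2 < b"
    and hol: "R holomorphic_on {w. a < norm w \<and> norm w < b}"
  obtains F G M1 M2 where "F holomorphic_on ball 0 r2" "G holomorphic_on {w. norm w > r1}"
    "\<And>x. r1 < norm x \<Longrightarrow> norm x < r2 \<Longrightarrow> F x + G x = R x"
    "\<And>x. norm x < r2 / 2 \<Longrightarrow> norm (F x - F 0) \<le> M2 * norm x"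
    "\<And>x. norm x > 2 * r1 \<Longrightarrow> norm (G x) \<le> M1 / norm x"
proof -
  define c :: complex where "c = 2 * pi * \<i>"
  have c0: "c \<noteq> 0" by (simp add: c_def)
  have nc: "norm c = 2 * pi" by (simp add: c_def norm_mult)
  define I where "I = (\<lambda>r x. contour_integral (circlepath 0 r) (\<lambda>w. R w / (w - x)))"
  define F where "F = (\<lambda>x. I r2 x / c)"
  define G where "G = (\<lambda>x. - (I r1 x / c))"
  have contR: "continuous_on (sphere 0 r) R" if "r1 \<le> r" "r \<le> r2" for r
  proof -
    have "sphere 0 r \<subseteq> {w. a < norm w \<and> norm w < b}" using that ab by auto
    then show ?thesis using holomorphic_on_imp_continuous_on[OF hol] continuous_on_subset by blast
  qed
  have hI: "I r holomorphic_on (- sphere 0 r)" if "r1 \<le> r" "r \<le> r2" for r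
    unfolding I_def using H_holo[OF _ contR[OF that]] that ab by simp
  have hF: "F holomorphic_on ball 0 r2"
    unfolding F_def
    by (intro holomorphic_intros holomorphic_on_subset[OF hI[of r2]] c0) (use ab in auto)
  have hG: "G holomorphic_on {w. norm w > r1}"
    unfolding G_def
    by (intro holomorphic_intros holomorphic_on_subset[OF hI[of r1]] c0) (use ab in auto)
  have sum: "F x + G x = R x" if "r1 < norm x" "norm x < r2" for x
  proof -
    have "I r2 x - I r1 x = c * R x"
      using annulus_cauchy[OF ab hol that] by (simp add: I_def c_def)
    then show ?thesis using c0 by (simp add: F_def G_def field_simps)
  qed
  have ci: "(\<lambda>w. R w / (w - x)) contour_integrable_on (circlepath 0 r)"
    if "r1 \<le> r" "r \<le> r2" "norm x \<noteq> r" for r x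
  proof (rule contour_integrable_continuous_circlepath)
    have r0: "r > 0" using that ab by auto
    show "continuous_on (path_image (circlepath 0 r)) (\<lambda>w. R w / (w - x))"
    proof -
      have pim: "path_image (circlepath 0 r) = sphere 0 r" using r0 by simp
      show ?thesis unfolding pim
        by (intro continuous_on_divide contR[OF that(1,2)] continuous_intros) (use that in auto)
    qed
  qed
  obtain K1 where K1: "K1 \<ge> 0" "\<And>w. norm w = r1 \<Longrightarrow> norm (R w) \<le> K1"
    using sphere_bound[OF contR[of r1]] ab by auto
  obtain K2 where K2: "K2 \<ge> 0" "\<And>w. norm w = r2 \<Longrightarrow> norm (R w) \<le> K2"
    using sphere_bound[OF contR[of r2]] ab by auto
  have bG: "norm (G x) \<le> (2 * K1 * r1) / norm x" if x: "norm x > 2 * r1" for x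
  proof -
    have nx: "norm x > 0" using x ab by auto
    have hi: "((\<lambda>w. R w / (w - x)) has_contour_integral I r1 x) (circlepath 0 r1)"
      unfolding I_def by (rule has_contour_integral_integral[OF ci]) (use x ab in auto)
    have "norm (I r1 x) \<le> (2 * K1 / norm x) * (2 * pi * r1)"
    proof (rule has_contour_integral_bound_circlepath[OF hi])
      show "0 \<le> 2 * K1 / norm x" using K1 nx by simp
      show "0 < r1" using ab by simp
      fix w :: complex assume "norm (w - 0) = r1"
      then have w: "norm w = r1" by simp
      have d: "norm (w - x) \<ge> norm x / 2"
        using norm_triangle_ineq2[of x w] w x by (simp add: norm_minus_commute)
      have dpos: "norm x / 2 > 0" using nx by simp
      have "norm (R w / (w - x)) = norm (R w) / norm (w - x)" by (simp add: norm_divide)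
      also have "\<dots> \<le> K1 / (norm x / 2)"
        using K1(2)[OF w] d dpos K1(1) by (intro frac_le) auto
      also have "\<dots> = 2 * K1 / norm x" by simp
      finally show "norm (R w / (w - x)) \<le> 2 * K1 / norm x" .
    qed
    then have "norm (I r1 x) / (2 * pi) \<le> (2 * K1 / norm x) * (2 * pi * r1) / (2 * pi)"
      by (rule divide_right_mono) simp
    moreover have "norm (G x) = norm (I r1 x) / (2 * pi)" by (simp add: G_def norm_divide nc)
    ultimately have "norm (G x) \<le> (2 * K1 / norm x) * (2 * pi * r1) / (2 * pi)" by simp
    also have "\<dots> = (2 * K1 * r1) / norm x" by simp
    finally show ?thesis .
  qed
  have bF: "norm (F x - F 0) \<le> (2 * K2 / r2) * norm x" if x: "norm x < r2 / 2" for x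
  proof -
    have r2p: "r2 > 0" using ab by simp
    have hi: "((\<lambda>w. R w / (w - x) - R w / (w - 0)) has_contour_integral I r2 x - I r2 0) (circlepath 0 r2)"
      unfolding I_def
      by (intro has_contour_integral_diff has_contour_integral_integral ci) (use x ab in auto)
    have "norm (I r2 x - I r2 0) \<le> (2 * K2 * norm x / r2 ^ 2) * (2 * pi * r2)"
    proof (rule has_contour_integral_bound_circlepath[OF hi])
      show "0 \<le> 2 * K2 * norm x / r2 ^ 2" using K2 by simp
      show "0 < r2" by fact
      fix w :: complex assume "norm (w - 0) = r2"
      then have w: "norm w = r2" by simp
      have d: "norm (w - x) \<ge> r2 / 2"
        using norm_triangle_ineq2[of w x] w x by simp
      have w0: "w \<noteq> 0" using w r2p by auto
      have wx: "w \<noteq> x" using w x r2p by auto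
      have eq: "R w / (w - x) - R w / (w - 0) = R w * x / ((w - x) * w)"
        using w0 wx by (simp add: field_simps)
      have "norm (R w * x / ((w - x) * w)) = norm (R w) * norm x / (norm (w - x) * r2)"
        by (simp add: norm_divide norm_mult w)
      also have "\<dots> \<le> K2 * norm x / (r2 / 2 * r2)"
        using K2(2)[OF w] d r2p K2(1)
        by (intro frac_le mult_right_mono mult_mono) auto
      also have "\<dots> = 2 * K2 * norm x / r2 ^ 2" by (simp add: power2_eq_square)
      finally show "norm (R w / (w - x) - R w / (w - 0)) \<le> 2 * K2 * norm x / r2 ^ 2"
        by (simp only: eq)
    qed
    then have "norm (I r2 x - I r2 0) / (2 * pi) \<le> (2 * K2 * norm x / r2 ^ 2) * (2 * pi * r2) / (2 * pi)"
      by (rule divide_right_mono) simp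
    moreover have "norm (F x - F 0) = norm (I r2 x - I r2 0) / (2 * pi)"
      unfolding F_def by (simp add: diff_divide_distrib[symmetric] norm_divide nc)
    ultimately have "norm (F x - F 0) \<le> (2 * K2 * norm x / r2 ^ 2) * (2 * pi * r2) / (2 * pi)" by simp
    also have "\<dots> = (2 * K2 / r2) * norm x" using r2p by (simp add: power2_eq_square)
    finally show ?thesis .
  qed
  show ?thesis
    by (rule that[OF hF hG sum bF bG])
qed

lemma pole_diff_analytic:
  assumes "h meromorphic_on {w}" "k analytic_on {w}" "is_pole (\<lambda>x. h x - k x) w"
  shows "is_pole h w \<and> zorder (\<lambda>x. h x - k x) w = zorder h w"
proof -
  obtain H where H: "(\<lambda>x. h (w + x)) has_laurent_expansion H"
    using assms(1) unfolding meromorphic_on_def by blast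
  obtain K where K: "(\<lambda>x. k (w + x)) has_fps_expansion K"
    using analytic_at_imp_has_fps_expansion[OF assms(2)] by blast
  have KK: "(\<lambda>x. k (w + x)) has_laurent_expansion fps_to_fls K"
    using K by (rule has_laurent_expansion_fps)
  have D: "(\<lambda>x. h (w + x) - k (w + x)) has_laurent_expansion H - fps_to_fls K"
    by (intro laurent_expansion_intros H KK)
  have Dneg: "fls_subdegree (H - fps_to_fls K) < 0"
    using is_pole_fls_subdegree_iff[of "\<lambda>x. h x - k x" w, OF D] assms(3) by simp
  then have D0: "H - fps_to_fls K \<noteq> 0" by auto
  have Kge: "fls_subdegree (fps_to_fls K) \<ge> 0" by (simp add: fls_subdegree_fls_to_fps)
  have Hneg: "fls_subdegree H < 0"
  proof (rule ccontr)
    assume "\<not> fls_subdegree H < 0"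
    then have "fls_subdegree (H - fps_to_fls K) \<ge> 0"
      using fls_subdegree_minus[OF D0] Kge by linarith
    then show False using Dneg by simp
  qed
  have H0: "H \<noteq> 0" using Hneg by auto
  have "is_pole h w" using is_pole_fls_subdegree_iff[OF H] Hneg by simp
  moreover have "fls_subdegree (H - fps_to_fls K) = fls_subdegree H"
    using fls_subdegree_diff_eq1[OF H0] Hneg Kge by simp
  moreover have "zorder (\<lambda>x. h x - k x) w = fls_subdegree (H - fps_to_fls K)"
    using has_laurent_expansion_zorder[of "\<lambda>x. h x - k x" w, OF D D0] by simp
  moreover have "zorder h w = fls_subdegree H"
    using has_laurent_expansion_zorder[OF H H0] by simp
  ultimately show ?thesis by simp
qed

definition phi :: "complex \<Rightarrow> complex" where "phi x = 1 / (1 - x)"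

lemma phi_mero: "phi meromorphic_on UNIV"
  unfolding phi_def by (intro meromorphic_intros)

lemma phi_mero': "(\<lambda>x. - phi x) meromorphic_on A"
  unfolding phi_def by (intro meromorphic_intros)

lemma phi_hol: "phi holomorphic_on ball 0 (1/2)"
proof -
  have "1 - x \<noteq> 0" if "x \<in> ball 0 (1/2)" for x :: complex
    using that by auto
  then show ?thesis unfolding phi_def by (intro holomorphic_intros) auto
qed

lemma phi_hol': "(\<lambda>x. - phi x) holomorphic_on {x. norm x > 2}"
proof -
  have "1 - x \<noteq> 0" if "x \<in> {x. norm x > 2}" for x :: complex
    using that by auto
  then show ?thesis unfolding phi_def by (intro holomorphic_intros) auto
qed

lemma phi_bd: "norm x < 1/2 \<Longrightarrow> norm (phi x - phi 0) \<le> 2 * norm x"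
proof -
  assume x: "norm x < 1/2"
  have d: "norm (1 - x) \<ge> 1/2" using norm_triangle_ineq2[of 1 x] x by simp
  have x1: "1 - x \<noteq> 0" using d by auto
  have "phi x - phi 0 = x / (1 - x)" using x1 by (simp add: phi_def field_simps)
  then have "norm (phi x - phi 0) = norm x / norm (1 - x)" by (simp add: norm_divide)
  also have "\<dots> \<le> norm x / (1/2)" using d by (intro divide_left_mono) auto
  finally show ?thesis by simp
qed

lemma phi_bd': "norm x > 2 \<Longrightarrow> norm (- phi x) \<le> 2 / norm x"
proof -
  assume x: "norm x > 2"
  have d: "norm (1 - x) \<ge> norm x / 2" using norm_triangle_ineq2[of x 1] x
    by (simp add: norm_minus_commute)
  have "norm (- phi x) = 1 / norm (1 - x)" by (simp add: phi_def norm_divide)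
  also have "\<dots> \<le> 1 / (norm x / 2)"
  proof (rule divide_left_mono)
    have "norm (1 - x) > 0" using d x by linarith
    moreover have "norm x / 2 > 0" using x by linarith
    ultimately show "0 < norm (1 - x) * (norm x / 2)" by simp
  qed (use d in auto)
  finally show ?thesis by simp
qed

lemma phi_pole: "is_pole phi w \<Longrightarrow> w = 1"
proof (rule ccontr)
  assume p: "is_pole phi w" and w: "w \<noteq> 1"
  have "phi holomorphic_on (- {1})" unfolding phi_def by (intro holomorphic_intros) auto
  then have "\<not> is_pole phi w" using w by (intro not_is_pole_holomorphic[of "-{1}"]) auto
  then show False using p by simp
qed

lemma phi_pole': "is_pole (\<lambda>x. - phi x) w \<Longrightarrow> w = 1"
proof (rule ccontr)
  assume p: "is_pole (\<lambda>x. - phi x) w" and w: "w \<noteq> 1"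
  have "(\<lambda>x. - phi x) holomorphic_on (- {1})" unfolding phi_def by (intro holomorphic_intros) auto
  then have "\<not> is_pole (\<lambda>x. - phi x) w" using w by (intro not_is_pole_holomorphic[of "-{1}"]) auto
  then show False using p by simp
qed

lemma phi_zorder: "zorder phi 1 = -1"
proof (rule zorder_eqI[of UNIV _ "\<lambda>_. -1"])
  fix w :: complex assume "w \<noteq> 1"
  then show "phi w = -1 * (w - 1) powi -1"
    by (simp add: phi_def power_int_minus field_simps)
qed auto

lemma phi_zorder': "zorder (\<lambda>x. - phi x) 1 = -1"
proof (rule zorder_eqI[of UNIV _ "\<lambda>_. 1"])
  fix w :: complex assume "w \<noteq> 1"
  then show "- phi w = 1 * (w - 1) powi -1"
    by (simp add: phi_def power_int_minus field_simps)
qed auto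

theorem proposition2p15:
  fixes q :: complex and R :: "complex \<Rightarrow> complex" and \<rho> :: real
  assumes "q \<noteq> 0" and "norm q > 1"
    and "R meromorphic_on (- {0})"
    and "\<rho> > 0"
  shows "\<exists>y. y meromorphic_on (- {0}) \<and>
           (\<forall>\<^sub>\<approx>x\<in>- {0}. y (q * x) = y x + R x) \<and>
           (\<forall>z. z \<noteq> 0 \<and> is_pole y z \<longrightarrow>
              ((\<exists>n::int. z = q powi n) \<and> pole_order y z \<le> 1)
              \<or> (\<exists>a\<in>poles_gt R \<rho>. (\<exists>n::nat. n \<ge> 1 \<and> z = a * q ^ n)
                                     \<and> pole_order y z \<le> pole_order R a)
              \<or> (\<exists>a\<in>poles_le R \<rho>. (\<exists>n::nat. z = a / q ^ n)
                                     \<and> pole_order y z \<le> pole_order R a))"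
proof -
  note q0 = assms(1) and nq = assms(2) and merR = assms(3) and rho = assms(4)
  define R' where "R' = remove_sings R"
  have merz: "R meromorphic_on {z}" if "z \<noteq> 0" for z
    by (rule meromorphic_on_subset[OF merR]) (use that in auto)
  have isoR: "isolated_singularity_at R z" if "z \<noteq> 0" for z
    using meromorphic_on_isolated_singularity[OF merz[OF that]] .
  have neR: "not_essential R z" if "z \<noteq> 0" for z
    using meromorphic_on_not_essential[OF merz[OF that]] .
  have merR': "R' meromorphic_on - {0}"
    unfolding R'_def by (rule remove_sings_meromorphic[OF merR])
  have poleR': "is_pole R' z \<longleftrightarrow> is_pole R z" if "z \<noteq> 0" for z
    unfolding R'_def by (rule is_pole_remove_sings_iff[OF isoR[OF that]])
  have zoR': "zorder R' z = zorder R z" if "z \<noteq> 0" for z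
    unfolding R'_def by (rule zorder_remove_sings[OF isoR[OF that]])
  have anaR': "R' analytic_on {z}" if z0: "z \<noteq> 0" and np: "\<not> is_pole R z" for z
  proof -
    obtain c where "R \<midarrow>z\<rightarrow> c" using neR[OF z0] np unfolding not_essential_def by blast
    then show ?thesis unfolding R'_def by (rule remove_sings_analytic_at[OF isoR[OF z0]])
  qed

  define K where "K = cball (0::complex) (\<rho> + 1) - ball 0 \<rho>"
  have cK: "compact K" unfolding K_def by (intro compact_diff compact_cball open_ball)
  have K0: "K \<subseteq> - {0}" using rho by (auto simp: K_def)
  have "eventually (\<lambda>z. \<not> is_pole R z) (cosparse (- {0}))"
    by (rule meromorphic_on_imp_not_pole_cosparse[OF merR])
  then have "{z. is_pole R z} sparse_in (- {0})" by (simp add: eventually_cosparse)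
  then have "{z. is_pole R z} sparse_in K" using K0 by (rule sparse_in_subset)
  then have finK: "finite (K \<inter> {z. is_pole R z})" using cK by (rule sparse_in_compact_finite)
  define Fin where "Fin = {z \<in> K \<inter> {z. is_pole R z}. \<rho> < norm z}"
  have finF: "finite Fin" unfolding Fin_def using finK by (rule finite_subset[rotated]) auto
  define s where "s = Min (insert (\<rho> + 1) (norm ` Fin))"
  have s_gt: "\<rho> < s" unfolding s_def using finF by (auto simp: Fin_def)
  have s_le: "s \<le> \<rho> + 1" unfolding s_def using finF by auto
  have nopole: "\<not> is_pole R z" if "\<rho> < norm z" "norm z < s" for z
  proof
    assume p: "is_pole R z"
    then have "z \<in> Fin" using that s_le by (auto simp: Fin_def K_def)
    then have "s \<le> norm z" unfolding s_def using finF by auto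
    then show False using that by simp
  qed
  define r1 where "r1 = \<rho> + (s - \<rho>) / 4"
  define r2 where "r2 = \<rho> + (s - \<rho>) / 2"
  have rr1: "\<rho> < r1" unfolding r1_def using s_gt by simp
  have rr2: "r1 < r2" unfolding r1_def r2_def using s_gt by simp
  have rr3: "r2 < s" unfolding r2_def using s_gt by (simp add: field_simps)
  note rr = rho rr1 rr2 rr3
  have holR': "R' holomorphic_on {w. \<rho> < norm w \<and> norm w < s}"
  proof -
    have "R' analytic_on {w. \<rho> < norm w \<and> norm w < s}"
    proof (rule analytic_on_analytic_at[THEN iffD2], rule ballI)
      fix w :: complex assume w: "w \<in> {w. \<rho> < norm w \<and> norm w < s}"
      then have w0: "w \<noteq> 0" using rho by auto
      have "\<not> is_pole R w" using w by (intro nopole) auto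
      then show "R' analytic_on {w}" by (rule anaR'[OF w0])
    qed
    then show ?thesis by (rule analytic_imp_holomorphic)
  qed
  obtain F G M2 M1 where FG: "F holomorphic_on ball 0 r2" "G holomorphic_on {w. norm w > r1}"
    "\<And>x. r1 < norm x \<Longrightarrow> norm x < r2 \<Longrightarrow> F x + G x = R' x"
    "\<And>x. norm x < r2 / 2 \<Longrightarrow> norm (F x - F 0) \<le> M2 * norm x"
    "\<And>x. norm x > 2 * r1 \<Longrightarrow> norm (G x) \<le> M1 / norm x"
    by (rule split_annulus[OF rr holR'], rule that)
  have oin: "open (ball (0::complex) r2)" by simp
  have oout: "open {w::complex. norm w > r1}" by (intro open_Collect_less continuous_intros)
  have anaF: "F analytic_on {z}" if "norm z < r2" for z
  proof -
    have "F analytic_on ball 0 r2" using FG(1) oin by (simp add: analytic_on_open)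
    then show ?thesis by (rule analytic_on_subset) (use that in auto)
  qed
  have anaG: "G analytic_on {z}" if "norm z > r1" for z
  proof -
    have "G analytic_on {w. norm w > r1}" using FG(2) oout by (simp add: analytic_on_open)
    then show ?thesis by (rule analytic_on_subset) (use that in auto)
  qed
  define f where "f = (\<lambda>x. if norm x < r2 then F x else R' x - G x)"
  define g where "g = (\<lambda>x. if norm x > r1 then G x else R' x - F x)"
  have fg: "f x + g x = R' x" for x
    using FG(3)[of x] rr by (auto simp: f_def g_def)
  have f_in: "eventually (\<lambda>x. f x = F x) (at z)" if "norm z < r2" for z
  proof -
    have "eventually (\<lambda>x. x \<in> ball 0 r2) (at z)" using that by (intro eventually_at_in_open') auto
    then show ?thesis by eventually_elim (auto simp: f_def)
  qed
  have f_out: "eventually (\<lambda>x. f x = R' x - G x) (at z)" if "norm z > r1" for z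
  proof -
    have "eventually (\<lambda>x. x \<in> {w. norm w > r1}) (at z)" using that oout by (intro eventually_at_in_open') auto
    then show ?thesis
    proof eventually_elim
      case (elim x)
      then show ?case using FG(3)[of x] by (auto simp: f_def algebra_simps)
    qed
  qed
  have g_out: "eventually (\<lambda>x. g x = G x) (at z)" if "norm z > r1" for z
  proof -
    have "eventually (\<lambda>x. x \<in> {w. norm w > r1}) (at z)" using that oout by (intro eventually_at_in_open') auto
    then show ?thesis by eventually_elim (auto simp: g_def)
  qed
  have g_in: "eventually (\<lambda>x. g x = R' x - F x) (at z)" if "norm z < r2" for z
  proof -
    have "eventually (\<lambda>x. x \<in> ball 0 r2) (at z)" using that by (intro eventually_at_in_open') auto
    then show ?thesis
    proof eventually_elim
      case (elim x)
      then show ?case using FG(3)[of x] by (auto simp: g_def algebra_simps)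
    qed
  qed
  have merR'z: "R' meromorphic_on {z}" if "z \<noteq> 0" for z
    by (rule meromorphic_on_subset[OF merR']) (use that in auto)
  have merf: "f meromorphic_on UNIV"
  proof (rule meromorphic_on_meromorphic_at[THEN iffD2], rule ballI)
    fix z :: complex assume "z \<in> UNIV"
    show "f meromorphic_on {z}"
    proof (cases "norm z < r2")
      case True
      have "f meromorphic_on {z} \<longleftrightarrow> F meromorphic_on {z}"
        by (rule meromorphic_on_cong) (use f_in[OF True] in auto)
      then show ?thesis using anaF[OF True] analytic_on_imp_meromorphic_on by blast
    next
      case False
      then have z: "norm z > r1" "z \<noteq> 0" using rr by auto
      have "f meromorphic_on {z} \<longleftrightarrow> (\<lambda>x. R' x - G x) meromorphic_on {z}"
        by (rule meromorphic_on_cong) (use f_out[OF z(1)] in auto)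
      moreover have "(\<lambda>x. R' x - G x) meromorphic_on {z}"
        by (intro meromorphic_intros merR'z[OF z(2)] analytic_on_imp_meromorphic_on anaG z(1))
      ultimately show ?thesis by blast
    qed
  qed
  have merg: "g meromorphic_on - {0}"
  proof (rule meromorphic_on_meromorphic_at[THEN iffD2], rule ballI)
    fix z :: complex assume "z \<in> - {0}"
    then have z0: "z \<noteq> 0" by simp
    show "g meromorphic_on {z}"
    proof (cases "norm z > r1")
      case True
      have "g meromorphic_on {z} \<longleftrightarrow> G meromorphic_on {z}"
        by (rule meromorphic_on_cong) (use g_out[OF True] in auto)
      then show ?thesis using anaG[OF True] analytic_on_imp_meromorphic_on by blast
    next
      case False
      then have z: "norm z < r2" using rr by auto
      have "g meromorphic_on {z} \<longleftrightarrow> (\<lambda>x. R' x - F x) meromorphic_on {z}"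
        by (rule meromorphic_on_cong) (use g_in[OF z] in auto)
      moreover have "(\<lambda>x. R' x - F x) meromorphic_on {z}"
        by (intro meromorphic_intros merR'z[OF z0] analytic_on_imp_meromorphic_on anaF z)
      ultimately show ?thesis by blast
    qed
  qed
  have holf: "f holomorphic_on ball 0 (r2 / 2)"
    by (rule holomorphic_transform[OF holomorphic_on_subset[OF FG(1)]]) (use rr in \<open>auto simp: f_def\<close>)
  have bdf: "norm (f x - f 0) \<le> M2 * norm x" if "norm x < r2 / 2" for x
    using FG(4)[OF that] that rr by (auto simp: f_def)
  have holg: "g holomorphic_on {x. norm x > 2 * r1}"
    by (rule holomorphic_transform[OF holomorphic_on_subset[OF FG(2)]]) (use rr in \<open>auto simp: g_def\<close>)
  have bdg: "norm (g x) \<le> M1 / norm x" if "norm x > 2 * r1" for x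
    using FG(5)[OF that] that rr by (auto simp: g_def)
  have r2p: "r2 / 2 > 0" and r1p: "2 * r1 > 0" using rr by auto

  note I1 = inner_sum[OF nq merf r2p holf bdf]
  note O1 = outer_sum[OF nq merg r1p holg bdg]
  note I2 = inner_sum[OF nq phi_mero _ phi_hol phi_bd]
  note O2 = outer_sum[OF nq phi_mero' _ phi_hol' phi_bd']

  define c where "c = f 0"
  define y1 where "y1 = (\<lambda>x. \<Sum>n. f (x / q ^ Suc n) - f 0)"
  define y2 where "y2 = (\<lambda>x. -(\<Sum>n. g (q ^ n * x)))"
  define z1 where "z1 = (\<lambda>x. \<Sum>n. phi (x / q ^ Suc n) - phi 0)"
  define z2 where "z2 = (\<lambda>x. -(\<Sum>n. - phi (q ^ n * x)))"
  define y where "y = (\<lambda>x. y1 x + y2 x + (- c) * z1 x + (- c) * z2 x)"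

  have eqn: "y (q * x) = y x + R' x" if x0: "x \<noteq> 0" for x
  proof -
    have e1: "y1 (q * x) = y1 x + (f x - f 0)" unfolding y1_def by (rule I1(2)) auto
    have e2: "y2 (q * x) = y2 x + g x" unfolding y2_def by (rule O1(2)) (use x0 in auto)
    have e3: "z1 (q * x) = z1 x + (phi x - phi 0)" unfolding z1_def by (rule I2(2)) auto
    have e4: "z2 (q * x) = z2 x + (- phi x)" unfolding z2_def by (rule O2(2)) (use x0 in auto)
    have p0: "phi 0 = 1" by (simp add: phi_def)
    show ?thesis
      unfolding y_def e1 e2 e3 e4 using fg[of x] p0 by (simp add: c_def algebra_simps)
  qed

  define V where "V z = {v. (v = -1 \<and> (\<exists>n::int. z = q powi n)) \<or>
      (\<exists>a\<in>poles_gt R \<rho>. (\<exists>n::nat. n \<ge> 1 \<and> z = a * q ^ n) \<and> v = zorder R a) \<or>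
      (\<exists>a\<in>poles_le R \<rho>. (\<exists>n::nat. z = a / q ^ n) \<and> v = zorder R a)}" for z

  have goody: "good y z (V z)" if z0: "z \<noteq> 0" for z
  proof -
    have V1: "{zorder f (z / q ^ Suc n) | n. is_pole f (z / q ^ Suc n)} \<subseteq> V z"
    proof safe
      fix n assume p: "is_pole f (z / q ^ Suc n)"
      define w where "w = z / q ^ Suc n"
      have w0: "w \<noteq> 0" using z0 q0 by (simp add: w_def)
      have pw: "is_pole f w" using p by (simp add: w_def)
      have wr2: "norm w \<ge> r2"
      proof (rule ccontr)
        assume "\<not> norm w \<ge> r2"
        then have "norm w < r2" by simp
        then have "is_pole f w \<longleftrightarrow> is_pole F w" by (intro is_pole_cong f_in) auto
        then show False using pw analytic_at_imp_no_pole[OF anaF] \<open>norm w < r2\<close> by blast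
      qed
      then have wr1: "norm w > r1" using rr by simp
      have "is_pole f w \<longleftrightarrow> is_pole (\<lambda>x. R' x - G x) w" by (intro is_pole_cong f_out[OF wr1]) auto
      then have pd: "is_pole (\<lambda>x. R' x - G x) w" using pw by simp
      have zz: "zorder f w = zorder (\<lambda>x. R' x - G x) w" by (intro zorder_cong f_out[OF wr1]) auto
      have pda: "is_pole R' w \<and> zorder (\<lambda>x. R' x - G x) w = zorder R' w"
        by (rule pole_diff_analytic[OF merR'z[OF w0] anaG[OF wr1] pd])
      have pR: "is_pole R w" using pda poleR'[OF w0] by simp
      have wgt: "w \<in> poles_gt R \<rho>" using pR w0 wr2 rr by (simp add: poles_gt_def)
      have zq: "z = w * q ^ Suc n" using q0 by (simp add: w_def)
      have v: "zorder f w = zorder R w" using zz pda zoR'[OF w0] by simp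
      have "\<exists>a\<in>poles_gt R \<rho>. (\<exists>n::nat. n \<ge> 1 \<and> z = a * q ^ n) \<and> zorder f w = zorder R a"
        using wgt zq v by (intro bexI[of _ w] conjI exI[of _ "Suc n"]) auto
      then show "zorder f (z / q ^ Suc n) \<in> V z"
        unfolding V_def w_def[symmetric] by blast
    qed
    have V2: "{zorder g (q ^ n * z) | n. is_pole g (q ^ n * z)} \<subseteq> V z"
    proof safe
      fix n assume p: "is_pole g (q ^ n * z)"
      define w where "w = q ^ n * z"
      have w0: "w \<noteq> 0" using z0 q0 by (simp add: w_def)
      have pw: "is_pole g w" using p by (simp add: w_def)
      have wr1: "norm w \<le> r1"
      proof (rule ccontr)
        assume "\<not> norm w \<le> r1"
        then have "norm w > r1" by simp
        then have "is_pole g w \<longleftrightarrow> is_pole G w" by (intro is_pole_cong g_out) auto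
        then show False using pw analytic_at_imp_no_pole[OF anaG] \<open>norm w > r1\<close> by blast
      qed
      then have wr2: "norm w < r2" using rr by simp
      have "is_pole g w \<longleftrightarrow> is_pole (\<lambda>x. R' x - F x) w" by (intro is_pole_cong g_in[OF wr2]) auto
      then have pd: "is_pole (\<lambda>x. R' x - F x) w" using pw by simp
      have zz: "zorder g w = zorder (\<lambda>x. R' x - F x) w" by (intro zorder_cong g_in[OF wr2]) auto
      have pda: "is_pole R' w \<and> zorder (\<lambda>x. R' x - F x) w = zorder R' w"
        by (rule pole_diff_analytic[OF merR'z[OF w0] anaF[OF wr2] pd])
      have pR: "is_pole R w" using pda poleR'[OF w0] by simp
      have "norm w \<le> \<rho>"
      proof (rule ccontr)
        assume "\<not> norm w \<le> \<rho>"
        then show False using nopole[of w] pR wr1 rr by simp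
      qed
      then have wle: "w \<in> poles_le R \<rho>" using pR w0 by (simp add: poles_le_def)
      have zq: "z = w / q ^ n" using q0 by (simp add: w_def)
      have v: "zorder g w = zorder R w" using zz pda zoR'[OF w0] by simp
      have "\<exists>a\<in>poles_le R \<rho>. (\<exists>n::nat. z = a / q ^ n) \<and> zorder g w = zorder R a"
        using wle zq v by (intro bexI[of _ w] conjI exI[of _ n]) auto
      then show "zorder g (q ^ n * z) \<in> V z"
        unfolding V_def w_def[symmetric] by blast
    qed
    have V3: "{zorder phi (z / q ^ Suc n) | n. is_pole phi (z / q ^ Suc n)} \<subseteq> V z"
    proof safe
      fix n assume p: "is_pole phi (z / q ^ Suc n)"
      then have e: "z / q ^ Suc n = 1" by (rule phi_pole)
      then have zq: "z = q ^ Suc n" using q0 by (simp add: divide_eq_1_iff)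
      have "z = q powi int (Suc n)" unfolding power_int_of_nat by (rule zq)
      then have "-1 \<in> V z" unfolding V_def by blast
      then show "zorder phi (z / q ^ Suc n) \<in> V z"
        by (simp only: e phi_zorder)
    qed
    have V4: "{zorder (\<lambda>x. - phi x) (q ^ n * z) | n. is_pole (\<lambda>x. - phi x) (q ^ n * z)} \<subseteq> V z"
    proof safe
      fix n assume p: "is_pole (\<lambda>x. - phi x) (q ^ n * z)"
      then have e: "q ^ n * z = 1" by (rule phi_pole')
      then have "z = inverse (q ^ n)" using q0 by (simp add: field_simps)
      then have "z = q powi (- int n)" by (simp add: power_int_minus power_int_of_nat)
      then have "-1 \<in> V z" unfolding V_def by blast
      then show "zorder (\<lambda>x. - phi x) (q ^ n * z) \<in> V z"
        by (simp only: e phi_zorder')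
    qed
    have g1: "good y1 z (V z)" unfolding y1_def by (rule good_mono[OF I1(3) V1]) auto
    have g2: "good y2 z (V z)" unfolding y2_def by (rule good_mono[OF O1(3) V2]) (use z0 in auto)
    have g3: "good z1 z (V z)" unfolding z1_def by (rule good_mono[OF I2(3) V3]) auto
    have g4: "good z2 z (V z)" unfolding z2_def by (rule good_mono[OF O2(3) V4]) (use z0 in auto)
    show ?thesis unfolding y_def
      by (intro good_add good_cmult g1 g2 g3 g4)
  qed

  show ?thesis
  proof (intro exI[of _ y] conjI allI impI)
    show "y meromorphic_on - {0}"
      by (rule meromorphic_on_meromorphic_at[THEN iffD2]) (use goody good_meromorphic in blast)
    have ev1: "eventually (\<lambda>x. R analytic_on {x}) (cosparse (- {0}))"
      by (rule meromorphic_on_imp_analytic_cosparse[OF merR])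
    have ev2: "eventually (\<lambda>x::complex. x \<in> - {0}) (cosparse (- {0}))"
      by (rule eventually_in_cosparse) (auto intro: open_Compl)
    show "\<forall>\<^sub>\<approx>x\<in>- {0}. y (q * x) = y x + R x"
      using ev1 ev2
    proof eventually_elim
      case (elim x)
      then have "R' x = R x" unfolding R'_def by (intro remove_sings_at_analytic) auto
      then show ?case using eqn[of x] elim by simp
    qed
  next
    fix z assume zp: "z \<noteq> 0 \<and> is_pole y z"
    then obtain v where v: "v \<in> V z" "v \<le> zorder y z"
      using good_pole[OF goody] by blast
    then show "((\<exists>n::int. z = q powi n) \<and> pole_order y z \<le> 1)
              \<or> (\<exists>a\<in>poles_gt R \<rho>. (\<exists>n::nat. n \<ge> 1 \<and> z = a * q ^ n)
                                     \<and> pole_order y z \<le> pole_order R a)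
              \<or> (\<exists>a\<in>poles_le R \<rho>. (\<exists>n::nat. z = a / q ^ n)
                                     \<and> pole_order y z \<le> pole_order R a)"
      unfolding V_def pole_order_def by force
  qed
qed

end
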